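(* Assume the genus expansion hypothesis (H$_G$). Let $\alpha\in U$ and $\xi>0$, and set $\gamma=\alpha^{\nu-1}/\xi$. Then for every integer $m\ge0$ there is a constant $K_{5,m}(\alpha,\gamma)$ such that, for all sufficiently large $n$, $$\Big|x_{n,\frac n\alpha,\frac{n^{\nu-1}}{\xi}}-\alpha\sum_{g=0}^m\frac{Z_g(\gamma n^{\nu-1})}{n^{2g}}\Big|<\frac{K_{5,m}(\alpha,\gamma)}{n^{2m+2+\frac{\nu-1}{\nu}}}.$$
   Context: Fix an integer $\nu\ge2$. For $N,r>0$ let $w_{N,r}(\lambda)=\exp[-N(\lambda^2/2+r\lambda^{2\nu}/(2\nu))]$, and let $x_{n,N,r}=b_n^2$ be the recurrence coefficients of the monic orthogonal polynomials: $\lambda\pi_n=\pi_{n+1}+b_n^2\pi_{n-1}$. Let $c_\nu=\binom{2\nu-1}{\nu-1}$. For $y\ge0$ let $Z_0(y)$ be the unique root in $(0,1]$ of $1=Z+c_\nu yZ^\nu$. For $g\ge1$ set $$Z_g(y)=\frac{Z_0(y)(Z_0(y)-1)P_{3g-2,\nu}(Z_0(y))}{(\nu-(\nu-1)Z_0(y))^{5g-1}},$$ where the $P_{3g-2,\nu}$ are fixed real polynomials of degree $3g-2$ (these are the generating functions for $2\nu$-valent 2-legged genus-$g$ maps). For fixed $\gamma>0$, $Z_g(\gamma n^{\nu-1})$ has a convergent expansion $\sum_{i\ge\nu-1}a_{i,g,\nu}(\gamma)n^{-i/\nu}$ for large $n$; in particular $Z_g(\gamma n^{\nu-1})=O(n^{-(\nu-1)/\nu})$.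 Hypothesis (H$_G$), the genus expansion: there is a neighborhood $U$ of $1$ such that for each $\alpha\in U$ and each integer $m\ge0$ there exist $K_{1,m}(\alpha)$ and $n_0$ such that, for all $n\ge n_0$ and all $r>0$, $$\Big|x_{n,n/\alpha,r}-\alpha\sum_{g=0}^m\frac{Z_g(\alpha^{\nu-1}r)}{n^{2g}}\Big|<\frac{K_{1,m}(\alpha)}{n^{2m+2}}.$$ *)

theory Defs
  imports "HOL-Analysis.Analysis" "HOL-Computational_Algebra.Polynomial"
begin

definition weight :: "nat \<Rightarrow> real \<Rightarrow> real \<Rightarrow> real \<Rightarrow> real" where
  "weight \<nu> N r t = exp (- N * (t^2 / 2 + r * t^(2*\<nu>) / (2 * real \<nu>)))"

definition monic_OPs :: "(real \<Rightarrow> real) \<Rightarrow> (nat \<Rightarrow> real poly) \<Rightarrow> bool" where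
  "monic_OPs w \<pi> \<longleftrightarrow>
     (\<forall>n. degree (\<pi> n) = n \<and> lead_coeff (\<pi> n) = 1 \<and>
        (\<forall>m<n. integrable lborel (\<lambda>t. poly (\<pi> n) t * poly (\<pi> m) t * w t) \<and>
               integral\<^sup>L lborel (\<lambda>t. poly (\<pi> n) t * poly (\<pi> m) t * w t) = 0))"

text \<open>Recurrence coefficient b_n^2 (n \<ge> 1): lambda pi_n = pi_{n+1} + b_n^2 pi_{n-1}.\<close>
definition rec_coeff :: "(real \<Rightarrow> real) \<Rightarrow> nat \<Rightarrow> real" where
  "rec_coeff w n = (THE b. \<forall>\<pi>. monic_OPs w \<pi> \<longrightarrow>
       [:0, 1:] * \<pi> n = \<pi> (Suc n) + smult b (\<pi> (n - 1)))"

definition xrec :: "nat \<Rightarrow> nat \<Rightarrow> real \<Rightarrow> real \<Rightarrow> real" where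
  "xrec \<nu> n N r = rec_coeff (weight \<nu> N r) n"

definition c_nu :: "nat \<Rightarrow> real" where
  "c_nu \<nu> = real ((2*\<nu> - 1) choose (\<nu> - 1))"

definition Z0 :: "nat \<Rightarrow> real \<Rightarrow> real" where
  "Z0 \<nu> y = (THE z. 0 < z \<and> z \<le> 1 \<and> 1 = z + c_nu \<nu> * y * z^\<nu>)"

text \<open>Z_g, parametrised by the family of polynomials P g = P_{3g-2,nu}.\<close>
definition Zg :: "nat \<Rightarrow> (nat \<Rightarrow> real poly) \<Rightarrow> nat \<Rightarrow> real \<Rightarrow> real" where
  "Zg \<nu> P g y = (if g = 0 then Z0 \<nu> y else
     Z0 \<nu> y * (Z0 \<nu> y - 1) * poly (P g) (Z0 \<nu> y) /
       (real \<nu> - (real \<nu> - 1) * Z0 \<nu> y) ^ (5*g - 1))"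

definition HG :: "nat \<Rightarrow> (nat \<Rightarrow> real poly) \<Rightarrow> real set \<Rightarrow> bool" where
  "HG \<nu> P U \<longleftrightarrow>
     (\<forall>\<alpha>\<in>U. \<forall>m::nat. \<exists>K n0. \<forall>n::nat\<ge>n0. \<forall>r>0.
        \<bar>xrec \<nu> n (real n / \<alpha>) r - \<alpha> * (\<Sum>g\<le>m. Zg \<nu> P g (\<alpha>^(\<nu>-1) * r) / real n ^ (2*g))\<bar>
          < K / real n ^ (2*m+2))"

end

theory Submission
  imports Defs
begin

lemma cnu_pos: "\<nu> \<ge> 1 \<Longrightarrow> c_nu \<nu> > 0"
  unfolding c_nu_def by simp

lemma Z0_props:
  assumes nu: "\<nu> \<ge> 1" and y: "y > 0"
  shows "0 < Z0 \<nu> y \<and> Z0 \<nu> y \<le> 1 \<and> 1 = Z0 \<nu> y + c_nu \<nu> * y * Z0 \<nu> y ^ \<nu>"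
proof -
  define c where "c = c_nu \<nu>"
  have c: "c > 0" using cnu_pos[OF nu] c_def by simp
  define f where "f = (\<lambda>z::real. z + c * y * z ^ \<nu>)"
  have "\<exists>z\<ge>0. z \<le> 1 \<and> f z = 1"
  proof (rule IVT)
    show "f 0 \<le> 1" using nu by (simp add: f_def zero_power)
    show "1 \<le> f 1" using c y by (simp add: f_def)
    show "\<forall>x. 0 \<le> x \<and> x \<le> 1 \<longrightarrow> isCont f x" unfolding f_def by (intro allI impI continuous_intros)
  qed simp
  then obtain z where z: "z \<ge> 0" "z \<le> 1" "f z = 1" by blast
  have f0: "f 0 = 0" using nu by (simp add: f_def zero_power)
  have zpos: "z > 0" using z f0 by (metis less_eq_real_def zero_neq_one)
  have uniq: "w = z" if "0 < w" "w \<le> 1" "1 = w + c * y * w ^ \<nu>" for w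
  proof (rule ccontr)
    assume "w \<noteq> z"
    then consider "w < z" | "z < w" by linarith
    then show False
    proof cases
      case 1
      have "w ^ \<nu> \<le> z ^ \<nu>" using 1 that by (intro power_mono) auto
      hence "c*y*w^\<nu> \<le> c*y*z^\<nu>" using c y by (intro mult_left_mono) auto
      thus False using 1 that z by (simp add: f_def)
    next
      case 2
      have "z ^ \<nu> \<le> w ^ \<nu>" using 2 z by (intro power_mono) auto
      hence "c*y*z^\<nu> \<le> c*y*w^\<nu>" using c y by (intro mult_left_mono) auto
      thus False using 2 that z by (simp add: f_def)
    qed
  qed
  have "Z0 \<nu> y = z"
    unfolding Z0_def c_def[symmetric]
  proof (rule the_equality)
    show "0 < z \<and> z \<le> 1 \<and> 1 = z + c * y * z ^ \<nu>" using z zpos by (simp add: f_def)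
    fix w assume "0 < w \<and> w \<le> 1 \<and> 1 = w + c * y * w ^ \<nu>"
    then show "w = z" using uniq by blast
  qed
  thus ?thesis using z zpos by (simp add: f_def c_def)
qed

lemma Z0_bound:
  assumes nu: "\<nu> \<ge> 1" and y: "y > 0"
  shows "Z0 \<nu> y \<le> (c_nu \<nu> * y) powr (-1 / real \<nu>)"
proof -
  define z where "z = Z0 \<nu> y"
  define c where "c = c_nu \<nu>"
  have c: "c > 0" using cnu_pos[OF nu] c_def by simp
  have p: "0 < z" "z \<le> 1" "1 = z + c * y * z ^ \<nu>" using Z0_props[OF nu y] z_def c_def by auto
  have "c * y * z ^ \<nu> \<le> 1" using p by linarith
  hence le: "z ^ \<nu> \<le> 1 / (c*y)" using c y by (simp add: field_simps)
  have "z = (z ^ \<nu>) powr (1 / real \<nu>)"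
    using p nu by (simp add: powr_realpow[symmetric] powr_powr)
  also have "\<dots> \<le> (1/(c*y)) powr (1 / real \<nu>)"
    using le p nu by (intro powr_mono2) auto
  also have "\<dots> = (c*y) powr (-1 / real \<nu>)"
    using c y by (simp add: powr_minus_divide powr_divide)
  finally show ?thesis using z_def c_def by simp
qed

lemma poly_bdd: "\<exists>M\<ge>0. \<forall>z\<in>{0..1::real}. \<bar>poly p z\<bar> \<le> M"
proof -
  have "compact ((\<lambda>z. poly p z) ` {0..1::real})"
    by (intro compact_continuous_image continuous_intros) auto
  then obtain B where B: "\<forall>x\<in>(\<lambda>z. poly p z) ` {0..1::real}. norm x \<le> B"
    using compact_imp_bounded bounded_iff by metis
  show ?thesis using B by (intro exI[of _ "\<bar>B\<bar>"]) force
qed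

lemma Zg_bound:
  assumes nu: "\<nu> \<ge> 1" and g: "g \<ge> 1"
  shows "\<exists>M\<ge>0. \<forall>y>0. \<bar>Zg \<nu> P g y\<bar> \<le> M * Z0 \<nu> y"
proof -
  obtain M where M: "M \<ge> 0" "\<forall>z\<in>{0..1::real}. \<bar>poly (P g) z\<bar> \<le> M"
    using poly_bdd by blast
  have "\<bar>Zg \<nu> P g y\<bar> \<le> M * Z0 \<nu> y" if y: "y > 0" for y
  proof -
    define z where "z = Z0 \<nu> y"
    have p: "0 < z" "z \<le> 1" using Z0_props[OF nu y] z_def by auto
    have d: "real \<nu> - (real \<nu> - 1) * z \<ge> 1"
    proof -
      have "(real \<nu> - 1) * z \<le> (real \<nu> - 1) * 1" using p nu by (intro mult_left_mono) auto
      thus ?thesis by simp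
    qed
    have dp: "(real \<nu> - (real \<nu> - 1) * z) ^ (5*g-1) \<ge> 1" using d by (simp add: one_le_power)
    have pm: "\<bar>poly (P g) z\<bar> \<le> M" using M p by auto
    have "\<bar>z * (z - 1) * poly (P g) z\<bar> = z * \<bar>z - 1\<bar> * \<bar>poly (P g) z\<bar>"
      using p by (simp add: abs_mult)
    also have "\<dots> \<le> z * 1 * M"
      using p pm by (intro mult_mono) auto
    finally have num: "\<bar>z * (z - 1) * poly (P g) z\<bar> \<le> z * M" by simp
    have "\<bar>Zg \<nu> P g y\<bar> = \<bar>z * (z - 1) * poly (P g) z\<bar> / (real \<nu> - (real \<nu> - 1) * z) ^ (5*g-1)"
      using g dp unfolding Zg_def z_def[symmetric] by (simp add: abs_divide)
    also have "\<dots> \<le> \<bar>z * (z - 1) * poly (P g) z\<bar>"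
      using divide_left_mono[OF dp, of "\<bar>z * (z - 1) * poly (P g) z\<bar>"] dp by simp
    finally show ?thesis using num z_def by (simp add: mult.commute)
  qed
  thus ?thesis using M by blast
qed

theorem lemmaA2:
  fixes \<nu> :: nat and P :: "nat \<Rightarrow> real poly" and U :: "real set" and \<alpha> \<xi> :: real
  assumes "\<nu> \<ge> 2"
    and "\<And>g. g \<ge> 1 \<Longrightarrow> degree (P g) = 3*g - 2"
    and "open U" and "1 \<in> U" and "U \<subseteq> {0<..}"
    and "HG \<nu> P U"
    and "\<alpha> \<in> U" and "\<xi> > 0"
  shows "\<forall>m::nat. \<exists>K. \<forall>\<^sub>F n in sequentially.
           \<bar>xrec \<nu> n (real n / \<alpha>) (real n ^ (\<nu>-1) / \<xi>)
             - \<alpha> * (\<Sum>g\<le>m. Zg \<nu> P g ((\<alpha>^(\<nu>-1) / \<xi>) * real n ^ (\<nu>-1)) / real n ^ (2*g))\<bar>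
           < K / real n powr (real (2*m+2) + (real \<nu> - 1) / real \<nu>)"
proof
  fix m :: nat
  have nu: "\<nu> \<ge> 1" using assms(1) by simp
  have apos: "\<alpha> > 0" using assms(5,7) by auto
  obtain K1 n0 where K1: "\<forall>n::nat\<ge>n0. \<forall>r>0.
        \<bar>xrec \<nu> n (real n / \<alpha>) r - \<alpha> * (\<Sum>g\<le>Suc m. Zg \<nu> P g (\<alpha>^(\<nu>-1) * r) / real n ^ (2*g))\<bar>
          < K1 / real n ^ (2*(Suc m)+2)"
    using assms(6,7) unfolding HG_def by blast
  obtain M where M: "M \<ge> 0" "\<forall>y>0. \<bar>Zg \<nu> P (Suc m) y\<bar> \<le> M * Z0 \<nu> y"
    using Zg_bound[OF nu, of "Suc m" P] by auto
  define \<gamma> where "\<gamma> = \<alpha>^(\<nu>-1) / \<xi>"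
  define c where "c = c_nu \<nu>"
  have gpos: "\<gamma> > 0" using apos assms(8) by (simp add: \<gamma>_def)
  have cpos: "c > 0" using cnu_pos[OF nu] by (simp add: c_def)
  define e where "e = real (2*m+2) + (real \<nu> - 1) / real \<nu>"
  define B where "B = \<alpha> * M * (c*\<gamma>) powr (-1 / real \<nu>)"
  have Bnn: "B \<ge> 0" using apos M by (simp add: B_def)
  show "\<exists>K. \<forall>\<^sub>F n in sequentially.
           \<bar>xrec \<nu> n (real n / \<alpha>) (real n ^ (\<nu>-1) / \<xi>)
             - \<alpha> * (\<Sum>g\<le>m. Zg \<nu> P g ((\<alpha>^(\<nu>-1) / \<xi>) * real n ^ (\<nu>-1)) / real n ^ (2*g))\<bar>
           < K / real n powr (real (2*m+2) + (real \<nu> - 1) / real \<nu>)"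
  proof (intro exI[of _ "\<bar>K1\<bar> + B"], unfold e_def[symmetric] \<gamma>_def[symmetric])
    show "\<forall>\<^sub>F n in sequentially.
           \<bar>xrec \<nu> n (real n / \<alpha>) (real n ^ (\<nu>-1) / \<xi>)
             - \<alpha> * (\<Sum>g\<le>m. Zg \<nu> P g (\<gamma> * real n ^ (\<nu>-1)) / real n ^ (2*g))\<bar>
           < (\<bar>K1\<bar> + B) / real n powr e"
      using eventually_ge_at_top[of "max n0 1"]
    proof eventually_elim
      case (elim n)
      define N where "N = real n"
      have N1: "N \<ge> 1" using elim by (simp add: N_def)
      have nn0: "n \<ge> n0" using elim by simp
      define r where "r = N ^ (\<nu>-1) / \<xi>"
      have rpos: "r > 0" using N1 assms(8) by (simp add: r_def)
      define y where "y = \<gamma> * N ^ (\<nu>-1)"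
      have ypos: "y > 0" using gpos N1 by (simp add: y_def)
      have ar: "\<alpha>^(\<nu>-1) * r = y" by (simp add: r_def y_def \<gamma>_def)
      define x where "x = xrec \<nu> n (real n / \<alpha>) r"
      define S where "S = (\<Sum>g\<le>m. Zg \<nu> P g y / N ^ (2*g))"
      define T where "T = Zg \<nu> P (Suc m) y / N ^ (2*Suc m)"
      have h: "\<bar>x - \<alpha> * (S + T)\<bar> < K1 / N ^ (2*(Suc m)+2)"
        using K1 nn0 rpos unfolding x_def S_def T_def ar[symmetric] N_def by simp
      have eN: "N powr e \<le> N ^ (2*(Suc m)+2)"
      proof -
        have "(real \<nu> - 1) / real \<nu> \<le> 1" using nu by simp
        hence "e \<le> real (2*(Suc m)+2)" by (simp add: e_def)
        hence "N powr e \<le> N powr real (2*(Suc m)+2)" using N1 by (intro powr_mono) auto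
        moreover have "N powr real (2*(Suc m)+2) = N ^ (2*(Suc m)+2)" using N1 by (intro powr_realpow) auto
        ultimately show ?thesis by simp
      qed
      have Nepos: "N powr e > 0" using N1 by simp
      have A1: "K1 / N ^ (2*(Suc m)+2) \<le> \<bar>K1\<bar> / N powr e"
      proof -
        have "K1 / N ^ (2*(Suc m)+2) \<le> \<bar>K1\<bar> / N ^ (2*(Suc m)+2)"
          using N1 by (intro divide_right_mono) auto
        also have "\<dots> \<le> \<bar>K1\<bar> / N powr e"
          using eN Nepos N1 by (intro divide_left_mono) (auto intro!: mult_pos_pos)
        finally show ?thesis .
      qed
      have Z0b: "Z0 \<nu> y \<le> (c * y) powr (-1 / real \<nu>)"
        using Z0_bound[OF nu ypos] by (simp add: c_def)
      have split: "(c*y) powr (-1 / real \<nu>) = (c*\<gamma>) powr (-1 / real \<nu>) * N powr (- ((real \<nu> - 1) / real \<nu>))"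
      proof -
        have "(c*y) powr (-1 / real \<nu>) = (c*\<gamma>) powr (-1 / real \<nu>) * (N ^ (\<nu>-1)) powr (-1 / real \<nu>)"
          using cpos gpos N1 by (simp add: y_def powr_mult mult.assoc)
        also have "(N ^ (\<nu>-1)) powr (-1 / real \<nu>) = N powr (real (\<nu>-1) * (-1 / real \<nu>))"
          using N1 by (simp add: powr_realpow[symmetric] powr_powr)
        also have "real (\<nu>-1) * (-1 / real \<nu>) = - ((real \<nu> - 1) / real \<nu>)"
          using nu by (simp add: of_nat_diff)
        finally show ?thesis .
      qed
      have Tb: "\<alpha> * \<bar>T\<bar> \<le> B / N powr e"
      proof -
        have "\<bar>T\<bar> = \<bar>Zg \<nu> P (Suc m) y\<bar> / N ^ (2*Suc m)" using N1 by (simp add: T_def abs_divide)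
        also have "\<dots> \<le> M * (c*y) powr (-1 / real \<nu>) / N ^ (2*Suc m)"
        proof (intro divide_right_mono)
          show "\<bar>Zg \<nu> P (Suc m) y\<bar> \<le> M * (c * y) powr (- 1 / real \<nu>)"
            using M ypos Z0b by (meson mult_left_mono order_trans)
        qed (use N1 in auto)
        also have "N ^ (2*Suc m) = N powr real (2*m+2)" using N1 powr_realpow[of N "2*m+2"] by simp
        also have "M * (c*y) powr (-1 / real \<nu>) / N powr real (2*m+2)
            = M * (c*\<gamma>) powr (-1 / real \<nu>) * (N powr (- ((real \<nu> - 1) / real \<nu>)) / N powr real (2*m+2))"
          unfolding split by simp
        also have "N powr (- ((real \<nu> - 1) / real \<nu>)) / N powr real (2*m+2) = 1 / N powr e"
          using N1 by (simp add: e_def powr_minus_divide powr_add)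
        finally have "\<bar>T\<bar> \<le> M * (c*\<gamma>) powr (-1 / real \<nu>) / N powr e" by simp
        hence "\<alpha> * \<bar>T\<bar> \<le> \<alpha> * (M * (c*\<gamma>) powr (-1 / real \<nu>) / N powr e)"
          using apos by (intro mult_left_mono) auto
        thus ?thesis by (simp add: B_def)
      qed
      have xs: "x - \<alpha> * S = (x - \<alpha> * (S + T)) + \<alpha> * T" by (simp add: algebra_simps)
      have tri: "\<bar>x - \<alpha> * S\<bar> \<le> \<bar>x - \<alpha> * (S + T)\<bar> + \<bar>\<alpha> * T\<bar>"
        unfolding xs by (rule abs_triangle_ineq)
      have aT: "\<bar>\<alpha> * T\<bar> = \<alpha> * \<bar>T\<bar>" using apos by (simp add: abs_mult)
      have "\<bar>x - \<alpha> * S\<bar> < \<bar>K1\<bar> / N powr e + B / N powr e" using tri aT h A1 Tb by linarith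
      hence "\<bar>x - \<alpha> * S\<bar> < (\<bar>K1\<bar> + B) / N powr e" by (simp add: add_divide_distrib)
      moreover have "x = xrec \<nu> n (real n / \<alpha>) (real n ^ (\<nu>-1) / \<xi>)" by (simp add: x_def r_def N_def)
      moreover have "S = (\<Sum>g\<le>m. Zg \<nu> P g (\<gamma> * real n ^ (\<nu>-1)) / real n ^ (2*g))"
        by (simp add: S_def y_def N_def)
      moreover have "N = real n" by (simp add: N_def)
      ultimately show ?case by simp
    qed
  qed
qed

end
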